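(* Let $X$ be a locally compact Hausdorff space, $\zeta$ a quasi-integral on $X$, $O\in\mathcal O(X)$, and $\widehat O=O\cup\{\infty\}$ the one-point compactification of $O$. Let $C_0(\widehat O)=\{f\in C(\widehat O)\mid f(\infty)=0\}$, in which $C_c(O)$ is uniformly dense; since $\zeta|_{C_c(O)}$ is Lipschitz, it has a unique Lipschitz extension $\widehat\zeta_O$ to $C_0(\widehat O)$. For general $f\in C(\widehat O)$ set $\widehat\zeta_O(f)=\widehat\zeta_O(f-f(\infty))+\lambda_O f(\infty)$, where $\lambda_O=\sup\{\zeta(g)\mid g\in C_c(O),\ g\le\mathbf 1_O\}$. Then $\widehat\zeta_O:C(\widehat O)\to\mathbb R$ is a quasi-integral on the compact space $\widehat O$; more precisely it is monotone, Lipschitz, and linear on every subspace $\{\phi\circ f\mid\phi\in C(\mathbb R)\}$, $f\in C(\widehat O)$.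
   Context: $C_c(X)$ denotes real-valued continuous functions with compact support, with the uniform norm; $\mathbf 1_A$ is an indicator function; $\mathcal O(X)$ is the family of open subsets of $X$ with compact closure. A quasi-integral on a locally compact Hausdorff space $X$ is a functional $\eta:C_c(X)\to\mathbb R$ such that: (i) $\eta(f)\le\eta(g)$ whenever $f\le g$; (ii) for every compact $K\subset X$ there is $N_K\ge0$ with $|\eta(f)-\eta(g)|\le N_K\|f-g\|$ for all $f,g$ supported in $K$; (iii) for every $f\in C_c(X)$, $\eta$ is linear on $\{\phi\circ f\mid \phi\in C(\mathbb R),\ \phi(0)=0\}$. *)

theory Defs
  imports "HOL-Analysis.Analysis"
begin

definition supp :: "('a::topological_space \<Rightarrow> real) \<Rightarrow> 'a set" where
  "supp f = {x. f x \<noteq> 0}"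

definition Cc :: "('a::topological_space \<Rightarrow> real) set" where
  "Cc = {f. continuous_on UNIV f \<and> compact (closure (supp f))}"

definition unorm :: "('a \<Rightarrow> real) \<Rightarrow> real" where
  "unorm f = (SUP x. \<bar>f x\<bar>)"

definition quasi_integral :: "(('a::topological_space \<Rightarrow> real) \<Rightarrow> real) \<Rightarrow> bool" where
  "quasi_integral \<eta> \<longleftrightarrow>
     (\<forall>f\<in>Cc. \<forall>g\<in>Cc. (\<forall>x. f x \<le> g x) \<longrightarrow> \<eta> f \<le> \<eta> g) \<and>
     (\<forall>K. compact K \<longrightarrow> (\<exists>N\<ge>0. \<forall>f\<in>Cc. \<forall>g\<in>Cc. supp f \<subseteq> K \<and> supp g \<subseteq> K \<longrightarrow>
           \<bar>\<eta> f - \<eta> g\<bar> \<le> N * unorm (\<lambda>x. f x - g x))) \<and>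
     (\<forall>f\<in>Cc. \<forall>\<phi> \<psi> :: real \<Rightarrow> real. \<forall>a b :: real.
        continuous_on UNIV \<phi> \<and> \<phi> 0 = 0 \<and> continuous_on UNIV \<psi> \<and> \<psi> 0 = 0 \<longrightarrow>
        \<eta> (\<lambda>x. a * \<phi> (f x) + b * \<psi> (f x)) = a * \<eta> (\<phi> \<circ> f) + b * \<eta> (\<psi> \<circ> f))"

text \<open>The one-point compactification \<open>W \<union> {\<infinity>}\<close> of a subset W of X, realised on
  \<open>'a option\<close>: \<open>Some x\<close> for \<open>x \<in> W\<close>, and \<open>None\<close> is the point at infinity.\<close>

definition ocomp :: "'a::topological_space set \<Rightarrow> 'a option topology" where
  "ocomp W = topology (\<lambda>U. (\<exists>V. open V \<and> V \<subseteq> W \<and> U = Some ` V) \<or>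
                            (\<exists>K. compact K \<and> K \<subseteq> W \<and> U = insert None (Some ` (W - K))))"

definition lift :: "('a \<Rightarrow> real) \<Rightarrow> 'a option \<Rightarrow> real" where
  "lift g = (\<lambda>p. case p of None \<Rightarrow> 0 | Some x \<Rightarrow> g x)"

definition hat_norm :: "'a set \<Rightarrow> ('a option \<Rightarrow> real) \<Rightarrow> real" where
  "hat_norm W f = (SUP p\<in>insert None (Some ` W). \<bar>f p\<bar>)"

definition CcO :: "'a::topological_space set \<Rightarrow> ('a \<Rightarrow> real) set" where
  "CcO W = {g\<in>Cc. closure (supp g) \<subseteq> W}"

text \<open>The unique Lipschitz (= uniformly continuous) extension of \<open>\<zeta>|C_c(W)\<close> to \<open>C_0(\<widehat>W)\<close>,
  evaluated at f: the limit of \<open>\<zeta> g\<close> as \<open>g \<in> C_c(W)\<close> tends uniformly to f.\<close>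

definition zhat0 :: "(('a::topological_space \<Rightarrow> real) \<Rightarrow> real) \<Rightarrow> 'a set \<Rightarrow> ('a option \<Rightarrow> real) \<Rightarrow> real" where
  "zhat0 \<zeta> W f = (THE v. \<forall>e>0. \<exists>d>0. \<forall>g\<in>CcO W.
        hat_norm W (\<lambda>p. lift g p - f p) < d \<longrightarrow> \<bar>\<zeta> g - v\<bar> < e)"

definition lambdaO :: "(('a::topological_space \<Rightarrow> real) \<Rightarrow> real) \<Rightarrow> 'a set \<Rightarrow> real" where
  "lambdaO \<zeta> W = Sup {\<zeta> g | g. g \<in> CcO W \<and> (\<forall>x. g x \<le> indicator W x)}"

definition zhat :: "(('a::topological_space \<Rightarrow> real) \<Rightarrow> real) \<Rightarrow> 'a set \<Rightarrow> ('a option \<Rightarrow> real) \<Rightarrow> real" where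
  "zhat \<zeta> W f = zhat0 \<zeta> W (\<lambda>p. f p - f None) + lambdaO \<zeta> W * f None"

end

theory Submission
  imports Defs
begin

lemma opt_split: "U = (U \<inter> {None}) \<union> Some ` {x. Some x \<in> U}"
proof (rule set_eqI)
  fix y show "y \<in> U \<longleftrightarrow> y \<in> (U \<inter> {None}) \<union> Some ` {x. Some x \<in> U}"
    by (cases y) auto
qed

definition oQ :: "'a::t2_space set \<Rightarrow> 'a option set \<Rightarrow> bool" where
  "oQ W U \<longleftrightarrow> U \<subseteq> insert None (Some ` W) \<and> open {x. Some x \<in> U} \<and>
     (None \<in> U \<longrightarrow> compact (W - {x. Some x \<in> U}))"

lemma oQ_iff:
  assumes "open (W::'a::t2_space set)"
  shows "((\<exists>V. open V \<and> V \<subseteq> W \<and> U = Some ` V) \<or>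
          (\<exists>K. compact K \<and> K \<subseteq> W \<and> U = insert None (Some ` (W - K)))) \<longleftrightarrow> oQ W U"
proof
  assume "(\<exists>V. open V \<and> V \<subseteq> W \<and> U = Some ` V) \<or>
          (\<exists>K. compact K \<and> K \<subseteq> W \<and> U = insert None (Some ` (W - K)))"
  then show "oQ W U"
  proof
    assume "\<exists>V. open V \<and> V \<subseteq> W \<and> U = Some ` V"
    then obtain V where V: "open V" "V \<subseteq> W" "U = Some ` V" by blast
    have "{x. Some x \<in> U} = V" using V by auto
    then show ?thesis using V unfolding oQ_def by auto
  next
    assume "\<exists>K. compact K \<and> K \<subseteq> W \<and> U = insert None (Some ` (W - K))"
    then obtain K where K: "compact K" "K \<subseteq> W" "U = insert None (Some ` (W - K))" by blast
    have e: "{x. Some x \<in> U} = W - K" using K by auto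
    have "open (W - K)" using assms K by (simp add: compact_imp_closed open_Diff)
    moreover have "W - (W - K) = K" using K by auto
    ultimately show ?thesis using K e unfolding oQ_def by auto
  qed
next
  assume q: "oQ W U"
  define Oz where "Oz = {x. Some x \<in> U}"
  have sub: "U \<subseteq> insert None (Some ` W)" and oO: "open Oz" and c: "None \<in> U \<Longrightarrow> compact (W - Oz)"
    using q unfolding oQ_def Oz_def by auto
  have OW: "Oz \<subseteq> W" using sub unfolding Oz_def by auto
  show "(\<exists>V. open V \<and> V \<subseteq> W \<and> U = Some ` V) \<or>
          (\<exists>K. compact K \<and> K \<subseteq> W \<and> U = insert None (Some ` (W - K)))"
  proof (cases "None \<in> U")
    case True
    have "U = insert None (Some ` (W - (W - Oz)))"
    proof -
      have "W - (W - Oz) = Oz" using OW by auto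
      moreover have "U = insert None (Some ` Oz)"
        using True opt_split[of U] unfolding Oz_def by auto
      ultimately show ?thesis by simp
    qed
    then show ?thesis using c True by (intro disjI2 exI[of _ "W - Oz"]) auto
  next
    case False
    have "U = Some ` Oz" using False opt_split[of U] unfolding Oz_def by auto
    then show ?thesis using oO OW by blast
  qed
qed

lemma istop_oQ: "istopology (oQ (W::'a::t2_space set))"
  unfolding istopology_def
proof safe
  fix S T assume S: "oQ W S" and T: "oQ W T"
  have e: "{x. Some x \<in> S \<inter> T} = {x. Some x \<in> S} \<inter> {x. Some x \<in> T}" by auto
  have "W - {x. Some x \<in> S \<inter> T} = (W - {x. Some x \<in> S}) \<union> (W - {x. Some x \<in> T})" by auto
  then show "oQ W (S \<inter> T)" using S T unfolding oQ_def e by (auto intro: open_Int compact_Un)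
next
  fix K assume K: "\<forall>S\<in>K. oQ W S"
  have e: "{x. Some x \<in> \<Union>K} = (\<Union>S\<in>K. {x. Some x \<in> S})" by auto
  have o: "open {x. Some x \<in> \<Union>K}" unfolding e using K unfolding oQ_def by auto
  have "compact (W - {x. Some x \<in> \<Union>K})" if nK: "None \<in> \<Union>K"
  proof -
    obtain S0 where S0: "S0 \<in> K" "None \<in> S0" using nK by auto
    have c: "compact (W - {x. Some x \<in> S0})" using K S0 unfolding oQ_def by auto
    have "W - {x. Some x \<in> \<Union>K} = (W - {x. Some x \<in> S0}) \<inter> (- {x. Some x \<in> \<Union>K})"
      using S0 by auto
    then show ?thesis using c o by (simp add: closed_Compl compact_Int_closed)
  qed
  moreover have "\<Union>K \<subseteq> insert None (Some ` W)" using K unfolding oQ_def by auto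
  ultimately show "oQ W (\<Union>K)" using o unfolding oQ_def by auto
qed

lemma openin_ocomp:
  assumes "open (W::'a::t2_space set)"
  shows "openin (ocomp W) U \<longleftrightarrow> oQ W U"
proof -
  have "(\<lambda>U. (\<exists>V. open V \<and> V \<subseteq> W \<and> U = Some ` V) \<or>
          (\<exists>K. compact K \<and> K \<subseteq> W \<and> U = insert None (Some ` (W - K)))) = oQ W"
    using oQ_iff[OF assms] by auto
  then have "ocomp W = topology (oQ W)" unfolding ocomp_def by simp
  then show ?thesis using topology_inverse'[OF istop_oQ[of W]] by simp
qed

lemma topspace_ocomp:
  assumes "open (W::'a::t2_space set)"
  shows "topspace (ocomp W) = insert None (Some ` W)"
proof -
  have "oQ W (insert None (Some ` W))" unfolding oQ_def
    using assms by (auto simp: image_iff)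
  moreover have "U \<subseteq> insert None (Some ` W)" if "oQ W U" for U using that unfolding oQ_def by auto
  ultimately show ?thesis unfolding topspace_def openin_ocomp[OF assms] by blast
qed


context
  fixes W :: "'a::t2_space set"
  assumes oW: "open W"
begin

lemma cm_open:
  assumes F: "continuous_map (ocomp W) euclideanreal F" and U: "open U"
  shows "open {x. x \<in> W \<and> F (Some x) \<in> U}"
    and "F None \<in> U \<Longrightarrow> compact (W - {x. x \<in> W \<and> F (Some x) \<in> U})"
proof -
  define S where "S = {p \<in> topspace (ocomp W). F p \<in> U}"
  have "openin (ocomp W) S" using F U unfolding continuous_map S_def by auto
  then have q: "oQ W S" using openin_ocomp[OF oW] by simp
  have e: "{x. Some x \<in> S} = {x. x \<in> W \<and> F (Some x) \<in> U}"
    unfolding S_def topspace_ocomp[OF oW] by auto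
  show "open {x. x \<in> W \<and> F (Some x) \<in> U}" using q e unfolding oQ_def by simp
  assume "F None \<in> U"
  then have "None \<in> S" unfolding S_def topspace_ocomp[OF oW] by auto
  then show "compact (W - {x. x \<in> W \<and> F (Some x) \<in> U})" using q e unfolding oQ_def by simp
qed

lemma cm_cont:
  assumes F: "continuous_map (ocomp W) euclideanreal F"
  shows "continuous_on W (\<lambda>x. F (Some x))"
  unfolding continuous_on_open_invariant
proof (intro allI impI)
  fix B :: "real set" assume "open B"
  then have "open {x. x \<in> W \<and> F (Some x) \<in> B}" using cm_open(1)[OF F] by simp
  moreover have "{x. x \<in> W \<and> F (Some x) \<in> B} \<inter> W = (\<lambda>x. F (Some x)) -` B \<inter> W" by auto
  ultimately show "\<exists>A. open A \<and> A \<inter> W = (\<lambda>x. F (Some x)) -` B \<inter> W" by blast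
qed

lemma cm_tail:
  assumes F: "continuous_map (ocomp W) euclideanreal F" and e: "e > 0"
  shows "\<exists>K. compact K \<and> K \<subseteq> W \<and> (\<forall>x\<in>W - K. \<bar>F (Some x) - F None\<bar> < e)"
proof -
  have c: "compact (W - {x. x \<in> W \<and> F (Some x) \<in> ball (F None) e})"
    using cm_open(2)[OF F, of "ball (F None) e"] e by simp
  show ?thesis
    by (rule exI[of _ "W - {x. x \<in> W \<and> F (Some x) \<in> ball (F None) e}"])
       (use c in \<open>auto simp: dist_real_def abs_minus_commute\<close>)
qed

lemma cm_bdd:
  assumes F: "continuous_map (ocomp W) euclideanreal F"
  shows "\<exists>B. \<forall>p\<in>topspace (ocomp W). \<bar>F p\<bar> \<le> B"
proof -
  obtain K where K: "compact K" "K \<subseteq> W" "\<forall>x\<in>W - K. \<bar>F (Some x) - F None\<bar> < 1"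
    using cm_tail[OF F, of 1] by auto
  have "continuous_on K (\<lambda>x. F (Some x))"
    using cm_cont[OF F] K(2) continuous_on_subset by blast
  then have "compact ((\<lambda>x. F (Some x)) ` K)" using K(1) compact_continuous_image by blast
  then obtain B where B: "\<forall>y\<in>(\<lambda>x. F (Some x)) ` K. norm y \<le> B"
    using compact_imp_bounded bounded_iff by metis
  show ?thesis
  proof (intro exI[of _ "max B (\<bar>F None\<bar> + 1)"] ballI)
    fix p assume p: "p \<in> topspace (ocomp W)"
    show "\<bar>F p\<bar> \<le> max B (\<bar>F None\<bar> + 1)"
    proof (cases p)
      case None then show ?thesis by simp
    next
      case (Some x)
      then have x: "x \<in> W" using p topspace_ocomp[OF oW] by auto
      show ?thesis
      proof (cases "x \<in> K")
        case True then show ?thesis using B Some by force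
      next
        case False then show ?thesis using K(3) x Some by force
      qed
    qed
  qed
qed

end

definition down :: "'a set \<Rightarrow> ('a option \<Rightarrow> real) \<Rightarrow> 'a \<Rightarrow> real" where
  "down W F x = (if x \<in> W then F (Some x) else 0)"

lemma Cc_bdd:
  assumes "g \<in> Cc"
  shows "\<exists>B. \<forall>x. \<bar>g x\<bar> \<le> B"
proof -
  have c: "continuous_on UNIV g" and k: "compact (closure (supp g))" using assms unfolding Cc_def by auto
  have "compact (g ` closure (supp g))"
    using c k compact_continuous_image continuous_on_subset by blast
  then obtain B where B: "\<forall>y\<in>g ` closure (supp g). norm y \<le> B"
    using compact_imp_bounded bounded_iff by metis
  show ?thesis
  proof (intro exI[of _ "max B 0"] allI)
    fix x show "\<bar>g x\<bar> \<le> max B 0"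
    proof (cases "x \<in> supp g")
      case True then show ?thesis using B closure_subset by fastforce
    next
      case False then show ?thesis unfolding supp_def by simp
    qed
  qed
qed

lemma unorm_le:
  assumes "\<And>x. \<bar>f x\<bar> \<le> e"
  shows "unorm f \<le> e"
  unfolding unorm_def by (rule cSUP_least) (use assms in auto)

lemma HN_up:
  assumes "\<forall>p\<in>insert None (Some ` W). \<bar>G p\<bar> \<le> B" "p \<in> insert None (Some ` W)"
  shows "\<bar>G p\<bar> \<le> hat_norm W G"
proof -
  have "bdd_above ((\<lambda>p. \<bar>G p\<bar>) ` insert None (Some ` W))"
    using assms(1) by (intro bdd_aboveI2[of _ _ B]) blast
  then show ?thesis unfolding hat_norm_def using assms(2) by (rule cSUP_upper[rotated])
qed

lemma HN_le:
  assumes "\<And>p. p \<in> insert None (Some ` W) \<Longrightarrow> \<bar>G p\<bar> \<le> e"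
  shows "hat_norm W G \<le> e"
  unfolding hat_norm_def by (rule cSUP_least) (use assms in auto)

context
  fixes W :: "'a::t2_space set"
  assumes oW: "open W"
begin

lemma CcO_of:
  assumes K: "compact K" "K \<subseteq> W" and c: "continuous_on W u" and z: "\<And>x. x \<notin> K \<Longrightarrow> u x = 0"
  shows "u \<in> CcO W"
proof -
  have cK: "closed K" using K compact_imp_closed by blast
  have "continuous_on (-K) (\<lambda>_. 0::real)" by (rule continuous_on_const)
  moreover have "\<And>x. x \<in> -K \<Longrightarrow> u x = 0" using z by simp
  ultimately have "continuous_on (-K) u"
    using continuous_on_cong[of "-K" "-K" u "\<lambda>_. 0"] by simp
  then have "continuous_on (W \<union> -K) u"
    using continuous_on_open_Un[of W "-K" u] oW cK c by auto
  moreover have "W \<union> -K = UNIV" using K by auto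
  ultimately have cu: "continuous_on UNIV u" by simp
  have "supp u \<subseteq> K" using z unfolding supp_def by auto
  then have cl: "closure (supp u) \<subseteq> K" using cK closure_minimal by blast
  then have "compact (closure (supp u))"
    using compact_Int_closed[OF K(1), of "closure (supp u)"] by (simp add: Int_absorb1)
  then show ?thesis using cl K cu unfolding CcO_def Cc_def by auto
qed

lemma CcO_D:
  assumes "g \<in> CcO W"
  shows "continuous_on UNIV g" "compact (closure (supp g))" "closure (supp g) \<subseteq> W"
    "\<And>x. x \<notin> closure (supp g) \<Longrightarrow> g x = 0" "\<And>x. x \<notin> W \<Longrightarrow> g x = 0" "g \<in> Cc"
proof -
  show "continuous_on UNIV g" "compact (closure (supp g))" "closure (supp g) \<subseteq> W" "g \<in> Cc"
    using assms unfolding CcO_def Cc_def by auto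
  show z: "\<And>x. x \<notin> closure (supp g) \<Longrightarrow> g x = 0"
  proof -
    fix x assume "x \<notin> closure (supp g)"
    then have "x \<notin> supp g" using closure_subset by blast
    then show "g x = 0" unfolding supp_def by simp
  qed
  show "\<And>x. x \<notin> W \<Longrightarrow> g x = 0"
    using z \<open>closure (supp g) \<subseteq> W\<close> by blast
qed

lemma CcO_comp:
  assumes g: "g \<in> CcO W" and p: "continuous_on UNIV \<phi>" "\<phi> 0 = 0"
  shows "(\<lambda>x. \<phi> (g x)) \<in> CcO W"
proof (rule CcO_of[of "closure (supp g)"])
  show "compact (closure (supp g))" "closure (supp g) \<subseteq> W" using CcO_D[OF g] by auto
  show "continuous_on W (\<lambda>x. \<phi> (g x))"
    using CcO_D(1)[OF g] p(1) continuous_on_compose2[of UNIV \<phi> UNIV g] continuous_on_subset by blast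
  show "\<And>x. x \<notin> closure (supp g) \<Longrightarrow> \<phi> (g x) = 0" using CcO_D(4)[OF g] p(2) by simp
qed

lemma CcO_lin:
  assumes g: "g \<in> CcO W" and h: "h \<in> CcO W"
  shows "(\<lambda>x. a * g x + b * h x) \<in> CcO W"
proof (rule CcO_of[of "closure (supp g) \<union> closure (supp h)"])
  show "compact (closure (supp g) \<union> closure (supp h))" "closure (supp g) \<union> closure (supp h) \<subseteq> W"
    using CcO_D[OF g] CcO_D[OF h] by auto
  show "continuous_on W (\<lambda>x. a * g x + b * h x)"
  proof -
    have "continuous_on W g" "continuous_on W h"
      using CcO_D(1)[OF g] CcO_D(1)[OF h] continuous_on_subset by blast+
    then show ?thesis by (intro continuous_intros)
  qed
  show "\<And>x. x \<notin> closure (supp g) \<union> closure (supp h) \<Longrightarrow> a * g x + b * h x = 0"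
    using CcO_D(4)[OF g] CcO_D(4)[OF h] by simp
qed

lemma down_CcO:
  assumes F: "continuous_map (ocomp W) euclideanreal F" and F0: "F None = 0" and e: "e > 0"
    and p: "continuous_on UNIV \<phi>" and z: "\<And>t. \<bar>t\<bar> \<le> e \<Longrightarrow> \<phi> t = 0"
  shows "(\<lambda>x. \<phi> (down W F x)) \<in> CcO W"
proof -
  obtain K where K: "compact K" "K \<subseteq> W" "\<forall>x\<in>W - K. \<bar>F (Some x) - F None\<bar> < e"
    using cm_tail[OF oW F e] by auto
  show ?thesis
  proof (rule CcO_of[OF K(1,2)])
    have "continuous_on W (\<lambda>x. \<phi> (F (Some x)))"
      using cm_cont[OF oW F] p continuous_on_compose2[of UNIV \<phi> W "\<lambda>x. F (Some x)"] by auto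
    moreover have "\<And>x. x \<in> W \<Longrightarrow> \<phi> (down W F x) = \<phi> (F (Some x))" by (simp add: down_def)
    ultimately show "continuous_on W (\<lambda>x. \<phi> (down W F x))"
      using continuous_on_cong[of W W "\<lambda>x. \<phi> (down W F x)" "\<lambda>x. \<phi> (F (Some x))"] by simp
    show "\<And>x. x \<notin> K \<Longrightarrow> \<phi> (down W F x) = 0"
      using K(3) z F0 e unfolding down_def by (auto simp: less_imp_le)
  qed
qed

end

locale qsetup =
  fixes \<zeta> :: "('a::t2_space \<Rightarrow> real) \<Rightarrow> real" and W :: "'a set"
  assumes oW: "open W" and cW: "compact (closure W)" and qi: "quasi_integral \<zeta>"
begin

lemma qi1: "\<forall>f\<in>Cc. \<forall>g\<in>Cc. (\<forall>x. f x \<le> g x) \<longrightarrow> \<zeta> f \<le> \<zeta> g"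
  using qi unfolding quasi_integral_def by (elim conjE)

lemma qi2: "\<forall>K. compact K \<longrightarrow> (\<exists>N\<ge>0. \<forall>f\<in>Cc. \<forall>g\<in>Cc. supp f \<subseteq> K \<and> supp g \<subseteq> K \<longrightarrow>
           \<bar>\<zeta> f - \<zeta> g\<bar> \<le> N * unorm (\<lambda>x. f x - g x))"
  using qi unfolding quasi_integral_def by (elim conjE)

lemma qi3: "\<forall>f\<in>Cc. \<forall>\<phi> \<psi> :: real \<Rightarrow> real. \<forall>a b :: real.
        continuous_on UNIV \<phi> \<and> \<phi> 0 = 0 \<and> continuous_on UNIV \<psi> \<and> \<psi> 0 = 0 \<longrightarrow>
        \<zeta> (\<lambda>x. a * \<phi> (f x) + b * \<psi> (f x)) = a * \<zeta> (\<phi> \<circ> f) + b * \<zeta> (\<psi> \<circ> f)"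
  using qi unfolding quasi_integral_def by (elim conjE)

lemma qmono: "f \<in> Cc \<Longrightarrow> g \<in> Cc \<Longrightarrow> (\<And>x. f x \<le> g x) \<Longrightarrow> \<zeta> f \<le> \<zeta> g"
  using qi1 by simp

lemma qlin:
  assumes "g \<in> Cc" "continuous_on UNIV \<phi>" "\<phi> 0 = 0" "continuous_on UNIV \<psi>" "\<psi> 0 = 0"
  shows "\<zeta> (\<lambda>x. a * \<phi> (g x) + b * \<psi> (g x)) = a * \<zeta> (\<lambda>x. \<phi> (g x)) + b * \<zeta> (\<lambda>x. \<psi> (g x))"
  using qi3[rule_format, of g \<phi> \<psi> a b] assms by (simp add: o_def)

lemma qadd:
  assumes "g \<in> Cc" "continuous_on UNIV \<phi>" "\<phi> 0 = 0" "continuous_on UNIV \<psi>" "\<psi> 0 = 0"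
  shows "\<zeta> (\<lambda>x. \<phi> (g x) + \<psi> (g x)) = \<zeta> (\<lambda>x. \<phi> (g x)) + \<zeta> (\<lambda>x. \<psi> (g x))"
  using qlin[OF assms, of 1 1] by simp

lemma qscale:
  assumes "g \<in> Cc" "continuous_on UNIV \<phi>" "\<phi> 0 = 0"
  shows "\<zeta> (\<lambda>x. a * \<phi> (g x)) = a * \<zeta> (\<lambda>x. \<phi> (g x))"
  using qlin[OF assms assms(2,3), of a 0] by simp

lemma zero_Cc: "(\<lambda>x. 0::real) \<in> Cc"
  unfolding Cc_def supp_def by auto

lemma qzero: "\<zeta> (\<lambda>x. 0) = 0"
  using qlin[OF zero_Cc, of "\<lambda>t. t" "\<lambda>t. t" 0 0] by simp

definition Nq where "Nq = (SOME N. N \<ge> 0 \<and> (\<forall>f\<in>Cc. \<forall>g\<in>Cc. supp f \<subseteq> closure W \<and> supp g \<subseteq> closure W \<longrightarrow>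
           \<bar>\<zeta> f - \<zeta> g\<bar> \<le> N * unorm (\<lambda>x. f x - g x)))"

lemma Nq: "Nq \<ge> 0 \<and> (\<forall>f\<in>Cc. \<forall>g\<in>Cc. supp f \<subseteq> closure W \<and> supp g \<subseteq> closure W \<longrightarrow>
           \<bar>\<zeta> f - \<zeta> g\<bar> \<le> Nq * unorm (\<lambda>x. f x - g x))"
proof -
  have "\<exists>N\<ge>0. \<forall>f\<in>Cc. \<forall>g\<in>Cc. supp f \<subseteq> closure W \<and> supp g \<subseteq> closure W \<longrightarrow>
           \<bar>\<zeta> f - \<zeta> g\<bar> \<le> N * unorm (\<lambda>x. f x - g x)"
    using qi2 cW by simp
  then show ?thesis unfolding Nq_def by (rule someI_ex)
qed

lemma Nq_ge: "Nq \<ge> 0" using Nq by blast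

lemma CcO_supp: "g \<in> CcO W \<Longrightarrow> supp g \<subseteq> closure W"
  using CcO_D(3)[OF oW] closure_subset closure_mono by blast

lemma qlip:
  assumes "f \<in> CcO W" "g \<in> CcO W" "\<And>x. \<bar>f x - g x\<bar> \<le> e"
  shows "\<bar>\<zeta> f - \<zeta> g\<bar> \<le> Nq * e"
proof -
  have "\<bar>\<zeta> f - \<zeta> g\<bar> \<le> Nq * unorm (\<lambda>x. f x - g x)"
    using Nq CcO_D(6)[OF oW] CcO_supp assms(1,2) by blast
  also have "\<dots> \<le> Nq * e" using unorm_le[of "\<lambda>x. f x - g x" e] assms(3) Nq_ge by (simp add: mult_left_mono)
  finally show ?thesis .
qed

abbreviation lam where "lam \<equiv> lambdaO \<zeta> W"

lemma lam_bdd: "bdd_above {\<zeta> g | g. g \<in> CcO W \<and> (\<forall>x. g x \<le> indicator W x)}"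
proof (rule bdd_aboveI[where M=Nq])
  fix y assume "y \<in> {\<zeta> g | g. g \<in> CcO W \<and> (\<forall>x. g x \<le> indicator W x)}"
  then obtain g where g: "g \<in> CcO W \<and> (\<forall>x. g x \<le> indicator W x)" and y: "y = \<zeta> g" by blast
  define h where "h = (\<lambda>x. max (g x) 0)"
  have hC: "h \<in> CcO W" unfolding h_def
    by (rule CcO_comp[OF oW]) (use g in \<open>auto intro!: continuous_intros\<close>)
  have zC: "(\<lambda>x. 0::real) \<in> CcO W" unfolding CcO_def using zero_Cc by (auto simp: supp_def)
  have "\<zeta> g \<le> \<zeta> h" using g hC by (intro qmono) (auto simp: h_def CcO_def)
  also have "\<zeta> h \<le> Nq"
  proof -
    have "\<bar>h x - 0\<bar> \<le> 1" for x
    proof -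
      have "g x \<le> 1" using g[THEN conjunct2, rule_format, of x] by (cases "x \<in> W") (auto simp: indicator_def)
      then show ?thesis unfolding h_def by simp
    qed
    then have "\<bar>\<zeta> h - \<zeta> (\<lambda>x. 0)\<bar> \<le> Nq * 1" using qlip[OF hC zC] by blast
    then show ?thesis using qzero by simp
  qed
  finally show "y \<le> Nq" using y by simp
qed

lemma lam_upper: "e \<in> CcO W \<Longrightarrow> (\<And>x. e x \<le> indicator W x) \<Longrightarrow> \<zeta> e \<le> lam"
  unfolding lambdaO_def by (rule cSup_upper[OF _ lam_bdd]) blast

lemma lam_ge0: "lam \<ge> 0"
proof -
  have zC: "(\<lambda>x. 0::real) \<in> CcO W" unfolding CcO_def using zero_Cc by (auto simp: supp_def)
  show ?thesis using lam_upper[OF zC] qzero by (simp add: indicator_def)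
qed

lemma key:
  assumes g: "g \<in> CcO W" and s: "s \<in> CcO W" and e: "e \<in> CcO W"
    and e01: "\<And>x. 0 \<le> e x" "\<And>x. e x \<le> 1"
    and e1: "\<And>x. g x \<noteq> 0 \<or> s x \<noteq> 0 \<Longrightarrow> e x = 1"
    and d: "d \<ge> 0" and le: "\<And>x. g x \<le> s x + d"
  shows "\<zeta> g \<le> \<zeta> s + d * lam"
proof -
  have gC: "g \<in> Cc" and sC: "s \<in> Cc" and eC: "e \<in> Cc" using g s e CcO_D(6)[OF oW] by auto
  have c1: "continuous_on UNIV (\<lambda>t::real. min t d)" "continuous_on UNIV (\<lambda>t::real. max (t - d) 0)"
    "continuous_on UNIV (\<lambda>t::real. min t 0)" "continuous_on UNIV (\<lambda>t::real. max t 0)"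
    by (auto intro!: continuous_intros)
  have g1: "\<zeta> g = \<zeta> (\<lambda>x. min (g x) d) + \<zeta> (\<lambda>x. max (g x - d) 0)"
  proof -
    have "\<zeta> (\<lambda>x. min (g x) d + max (g x - d) 0) = \<zeta> (\<lambda>x. min (g x) d) + \<zeta> (\<lambda>x. max (g x - d) 0)"
      using qadd[OF gC c1(1) _ c1(2)] d by simp
    moreover have "(\<lambda>x. min (g x) d + max (g x - d) 0) = g" by (auto simp: min_def max_def)
    ultimately show ?thesis by simp
  qed
  have s1: "\<zeta> s = \<zeta> (\<lambda>x. min (s x) 0) + \<zeta> (\<lambda>x. max (s x) 0)"
  proof -
    have "\<zeta> (\<lambda>x. min (s x) 0 + max (s x) 0) = \<zeta> (\<lambda>x. min (s x) 0) + \<zeta> (\<lambda>x. max (s x) 0)"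
      using qadd[OF sC c1(3) _ c1(4)] by simp
    moreover have "(\<lambda>x. min (s x) 0 + max (s x) 0) = s" by (auto simp: min_def max_def)
    ultimately show ?thesis by simp
  qed
  have p1: "(\<lambda>x. max (g x - d) 0) \<in> CcO W"
    by (rule CcO_comp[OF oW g]) (use d in \<open>auto intro!: continuous_intros\<close>)
  have p2: "(\<lambda>x. max (s x) 0) \<in> CcO W"
    by (rule CcO_comp[OF oW s]) (auto intro!: continuous_intros)
  have m1: "\<zeta> (\<lambda>x. max (g x - d) 0) \<le> \<zeta> (\<lambda>x. max (s x) 0)"
  proof (rule qmono)
    show "(\<lambda>x. max (g x - d) 0) \<in> Cc" "(\<lambda>x. max (s x) 0) \<in> Cc" using p1 p2 CcO_D(6)[OF oW] by auto
    fix x show "max (g x - d) 0 \<le> max (s x) 0" using le[of x] by linarith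
  qed
  define r where "r = (\<lambda>x. min (s x) 0)"
  have rC: "r \<in> CcO W" unfolding r_def
    by (rule CcO_comp[OF oW s]) (auto intro!: continuous_intros)
  define w where "w = (\<lambda>x. 1 * r x + (- d) * e x)"
  have wC: "w \<in> CcO W" unfolding w_def by (rule CcO_lin[OF oW rC e])
  have wr: "\<And>x. min (w x + d) 0 = r x" and we: "\<And>x. min (- w x) d = d * e x"
  proof -
    fix x
    have "(e x = 1) \<or> (r x = 0)"
    proof (cases "s x = 0")
      case True then show ?thesis unfolding r_def by simp
    next
      case False then show ?thesis using e1[of x] by blast
    qed
    then show "min (w x + d) 0 = r x" "min (- w x) d = d * e x"
      unfolding w_def r_def using e01[of x] d
      by (auto simp: min_def mult_le_cancel_left1 mult_left_le)
  qed
  have c2: "continuous_on UNIV (\<lambda>t::real. min (t + d) 0)" "continuous_on UNIV (\<lambda>t::real. min (- t) d)"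
    by (auto intro!: continuous_intros)
  have "\<zeta> (\<lambda>x. min (w x + d) 0 + min (- w x) d) = \<zeta> (\<lambda>x. min (w x + d) 0) + \<zeta> (\<lambda>x. min (- w x) d)"
    using qadd[OF _ c2(1) _ c2(2)] wC CcO_D(6)[OF oW] d by simp
  then have A: "\<zeta> (\<lambda>x. r x + d * e x) = \<zeta> r + \<zeta> (\<lambda>x. d * e x)"
    unfolding wr we by (simp add: r_def[symmetric])
  have B: "\<zeta> (\<lambda>x. d * e x) \<le> d * lam"
  proof -
    have "\<zeta> (\<lambda>x. d * e x) = d * \<zeta> e"
      using qscale[OF eC, of "\<lambda>t. t" d] by simp
    moreover have "\<zeta> e \<le> lam"
    proof (rule lam_upper[OF e])
      fix x show "e x \<le> indicator W x"
        using CcO_D(5)[OF oW e, of x] e01[of x] by (auto simp: indicator_def)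
    qed
    ultimately show ?thesis using d by (simp add: mult_left_mono)
  qed
  have p3: "(\<lambda>x. min (g x) d) \<in> CcO W"
    by (rule CcO_comp[OF oW g]) (use d in \<open>auto intro!: continuous_intros\<close>)
  have p4: "(\<lambda>x. r x + d * e x) \<in> CcO W"
    using CcO_lin[OF oW rC e, of 1 d] by simp
  have m2: "\<zeta> (\<lambda>x. min (g x) d) \<le> \<zeta> (\<lambda>x. r x + d * e x)"
  proof (rule qmono)
    show "(\<lambda>x. min (g x) d) \<in> Cc" "(\<lambda>x. r x + d * e x) \<in> Cc" using p3 p4 CcO_D(6)[OF oW] by auto
    fix x
    show "min (g x) d \<le> r x + d * e x"
    proof (cases "e x = 1")
      case True then show ?thesis using le[of x] unfolding r_def by (auto simp: min_def)
    next
      case False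
      then have "g x = 0" "s x = 0" using e1[of x] by auto
      then show ?thesis unfolding r_def using e01[of x] d by (simp add: min_def)
    qed
  qed
  show ?thesis using g1 s1 m1 m2 A B unfolding r_def by linarith
qed

end

definition trunc :: "real \<Rightarrow> real \<Rightarrow> real" where
  "trunc h t = max (t - h) 0 + min (t + h) 0"

lemma trunc_cont: "continuous_on UNIV (trunc h)"
  unfolding trunc_def by (auto intro!: continuous_intros)

lemma trunc_close: "h \<ge> 0 \<Longrightarrow> \<bar>trunc h t - t\<bar> \<le> h"
  unfolding trunc_def by (auto simp: max_def min_def)

lemma trunc_zero: "\<bar>t\<bar> \<le> h \<Longrightarrow> trunc h t = 0"
  unfolding trunc_def by (auto simp: max_def min_def)

lemma trunc_mono: "h \<ge> 0 \<Longrightarrow> d \<ge> 0 \<Longrightarrow> t \<le> u + d \<Longrightarrow> trunc h t \<le> trunc h u + d"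
  unfolding trunc_def by (auto simp: max_def min_def)

lemma trunc_nz: "trunc h t \<noteq> 0 \<Longrightarrow> \<bar>t\<bar> > h"
  by (metis not_less trunc_zero)

context qsetup
begin

abbreviation Ts where "Ts \<equiv> insert None (Some ` W)"

definition appr where "appr F h = (\<lambda>x. trunc h (down W F x))"

lemma appr_CcO:
  assumes F: "continuous_map (ocomp W) euclideanreal F" "F None = 0" and h: "h > 0"
  shows "appr F h \<in> CcO W"
  unfolding appr_def
  by (rule down_CcO[OF oW F h trunc_cont trunc_zero])

lemma appr_close:
  assumes h: "h \<ge> 0" and F0: "F None = 0" and p: "p \<in> Ts"
  shows "\<bar>lift (appr F h) p - F p\<bar> \<le> h"
  using p trunc_close[OF h] h F0 by (auto simp: lift_def appr_def down_def)

lemma appr_hn: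
  assumes h: "h \<ge> 0" and F0: "F None = 0"
  shows "hat_norm W (\<lambda>p. lift (appr F h) p - F p) \<le> h"
  by (rule HN_le) (rule appr_close[where F=F, OF h F0])

lemma bdd_F:
  assumes F: "continuous_map (ocomp W) euclideanreal F"
  shows "\<exists>B. \<forall>p\<in>Ts. \<bar>F p\<bar> \<le> B"
  using cm_bdd[OF oW F] topspace_ocomp[OF oW] by simp

lemma bdd_diff:
  assumes F: "continuous_map (ocomp W) euclideanreal F" and g: "g \<in> CcO W"
  shows "\<exists>B. \<forall>p\<in>Ts. \<bar>lift g p - F p\<bar> \<le> B"
proof -
  obtain B1 where B1: "\<forall>p\<in>Ts. \<bar>F p\<bar> \<le> B1" using bdd_F[OF F] by blast
  obtain B2 where B2: "\<forall>x. \<bar>g x\<bar> \<le> B2" using Cc_bdd CcO_D(6)[OF oW g] by blast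
  have "\<bar>lift g p\<bar> \<le> max B2 0" for p
  proof (cases p)
    case (Some x) then show ?thesis using B2[rule_format, of x] by (simp add: lift_def)
  qed (simp add: lift_def)
  then have "\<forall>p\<in>Ts. \<bar>lift g p - F p\<bar> \<le> max B2 0 + B1"
    using B1 by (smt (verit))
  then show ?thesis by blast
qed

lemma hn_up:
  assumes F: "continuous_map (ocomp W) euclideanreal F" and g: "g \<in> CcO W" and p: "p \<in> Ts"
  shows "\<bar>lift g p - F p\<bar> \<le> hat_norm W (\<lambda>p. lift g p - F p)"
proof -
  obtain B where "\<forall>p\<in>Ts. \<bar>lift g p - F p\<bar> \<le> B" using bdd_diff[OF F g] by blast
  then show ?thesis using HN_up[of W "\<lambda>p. lift g p - F p" B p] p by simp
qed

lemma hn_ge0: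
  assumes F: "continuous_map (ocomp W) euclideanreal F" and g: "g \<in> CcO W"
  shows "hat_norm W (\<lambda>p. lift g p - F p) \<ge> 0"
  using hn_up[OF F g, of None] by simp

lemma hl:
  assumes F: "continuous_map (ocomp W) euclideanreal F" and g: "g \<in> CcO W" and h: "h \<in> CcO W"
  shows "\<bar>\<zeta> g - \<zeta> h\<bar> \<le> Nq * (hat_norm W (\<lambda>p. lift g p - F p) + hat_norm W (\<lambda>p. lift h p - F p))"
proof (rule qlip[OF g h])
  fix x
  show "\<bar>g x - h x\<bar> \<le> hat_norm W (\<lambda>p. lift g p - F p) + hat_norm W (\<lambda>p. lift h p - F p)"
  proof (cases "x \<in> W")
    case True
    have "\<bar>lift g (Some x) - F (Some x)\<bar> \<le> hat_norm W (\<lambda>p. lift g p - F p)"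
      "\<bar>lift h (Some x) - F (Some x)\<bar> \<le> hat_norm W (\<lambda>p. lift h p - F p)"
      using hn_up[OF F g] hn_up[OF F h] True by auto
    then show ?thesis by (simp add: lift_def)
  next
    case False
    then have "g x = 0" "h x = 0" using CcO_D(5)[OF oW] g h by auto
    then show ?thesis using hn_ge0[OF F g] hn_ge0[OF F h] by simp
  qed
qed

definition Pz where "Pz F v \<longleftrightarrow> (\<forall>e>0. \<exists>d>0. \<forall>g\<in>CcO W.
        hat_norm W (\<lambda>p. lift g p - F p) < d \<longrightarrow> \<bar>\<zeta> g - v\<bar> < e)"

lemma zhat0_Pz: "zhat0 \<zeta> W F = (THE v. Pz F v)"
  unfolding zhat0_def Pz_def by simp

lemma Pz_unique:
  assumes F: "continuous_map (ocomp W) euclideanreal F" "F None = 0"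
    and v1: "Pz F v1" and v2: "Pz F v2"
  shows "v1 = v2"
proof -
  have "\<bar>v1 - v2\<bar> \<le> 0 + e" if e: "e > 0" for e
  proof -
    obtain d1 where d1: "d1 > 0" "\<forall>g\<in>CcO W. hat_norm W (\<lambda>p. lift g p - F p) < d1 \<longrightarrow> \<bar>\<zeta> g - v1\<bar> < e/2"
      using v1 e unfolding Pz_def by (meson half_gt_zero)
    obtain d2 where d2: "d2 > 0" "\<forall>g\<in>CcO W. hat_norm W (\<lambda>p. lift g p - F p) < d2 \<longrightarrow> \<bar>\<zeta> g - v2\<bar> < e/2"
      using v2 e unfolding Pz_def by (meson half_gt_zero)
    define h where "h = min d1 d2 / 2"
    have h: "h > 0" "h < d1" "h < d2" using d1 d2 unfolding h_def by auto
    have a: "appr F h \<in> CcO W" using appr_CcO[OF F h(1)] .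
    have "hat_norm W (\<lambda>p. lift (appr F h) p - F p) \<le> h" using appr_hn[where F=F, OF _ F(2)] h by simp
    then have "\<bar>\<zeta> (appr F h) - v1\<bar> < e/2" "\<bar>\<zeta> (appr F h) - v2\<bar> < e/2"
      using d1(2) d2(2) a h by force+
    then show ?thesis by linarith
  qed
  then have "\<bar>v1 - v2\<bar> \<le> 0" by (rule field_le_epsilon)
  then show ?thesis by simp
qed

lemma Pz_exists:
  assumes F: "continuous_map (ocomp W) euclideanreal F" "F None = 0"
  shows "\<exists>v. Pz F v"
proof -
  define a where "a n = appr F (1 / Suc n)" for n
  have aC: "a n \<in> CcO W" for n unfolding a_def by (rule appr_CcO[OF F]) simp
  have ah: "hat_norm W (\<lambda>p. lift (a n) p - F p) \<le> 1 / Suc n" for n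
    unfolding a_def by (rule appr_hn[where F=F, OF _ F(2)]) simp
  have ad: "\<bar>\<zeta> (a m) - \<zeta> (a n)\<bar> \<le> Nq * (1 / Suc m + 1 / Suc n)" for m n
  proof -
    have "\<bar>\<zeta> (a m) - \<zeta> (a n)\<bar> \<le> Nq * (hat_norm W (\<lambda>p. lift (a m) p - F p) + hat_norm W (\<lambda>p. lift (a n) p - F p))"
      by (rule hl[OF F(1) aC aC])
    also have "\<dots> \<le> Nq * (1 / Suc m + 1 / Suc n)"
      using ah[of m] ah[of n] Nq_ge by (intro mult_left_mono) auto
    finally show ?thesis .
  qed
  have small: "\<exists>M. \<forall>n\<ge>M. 1 / real (Suc n) < c" if c: "c > 0" for c
  proof -
    obtain M where M: "1 / real (Suc M) < c" using c by (meson nat_approx_posE)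
    have "\<forall>n\<ge>M. 1 / real (Suc n) < c"
    proof (intro allI impI)
      fix n assume "n \<ge> M"
      then have "1 / real (Suc n) \<le> 1 / real (Suc M)" by (simp add: frac_le)
      then show "1 / real (Suc n) < c" using M by linarith
    qed
    then show ?thesis by blast
  qed
  have "Cauchy (\<lambda>n. \<zeta> (a n))"
  proof (rule CauchyI)
    fix e :: real assume e: "e > 0"
    obtain M where M: "\<forall>n\<ge>M. 1 / real (Suc n) < e / (2 * (Nq + 1))"
      using small[of "e / (2 * (Nq + 1))"] e Nq_ge by auto
    have "norm (\<zeta> (a m) - \<zeta> (a n)) < e" if "m \<ge> M" "n \<ge> M" for m n
    proof -
      have "e / (2 * (Nq + 1)) = (e / (Nq + 1)) / 2" by simp
      then have "e / (2 * (Nq + 1)) + e / (2 * (Nq + 1)) = e / (Nq + 1)" by (simp only: field_sum_of_halves)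
      then have "1 / real (Suc m) + 1 / real (Suc n) < e / (Nq + 1)" using M that by smt
      then have "Nq * (1 / Suc m + 1 / Suc n) \<le> Nq * (e / (Nq + 1))" using Nq_ge by (intro mult_left_mono) auto
      also have "\<dots> < e" using Nq_ge e by (simp add: field_simps)
      finally show ?thesis using ad[of m n] by simp
    qed
    then show "\<exists>M. \<forall>m\<ge>M. \<forall>n\<ge>M. norm (\<zeta> (a m) - \<zeta> (a n)) < e" by blast
  qed
  then obtain v where v: "(\<lambda>n. \<zeta> (a n)) \<longlonglongrightarrow> v" using Cauchy_convergent_iff convergent_def by blast
  have "Pz F v" unfolding Pz_def
  proof (intro allI impI)
    fix e :: real assume e: "e > 0"
    define d where "d = e / (4 * (Nq + 1))"
    have d: "d > 0" using e Nq_ge unfolding d_def by simp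
    have Nd: "Nq * (2 * d) \<le> e / 2" using Nq_ge e unfolding d_def by (simp add: field_simps)
    obtain n1 where n1: "\<forall>n\<ge>n1. norm (\<zeta> (a n) - v) < e / 2" using v e unfolding LIMSEQ_iff by (meson half_gt_zero)
    obtain n2 where n2: "\<forall>n\<ge>n2. 1 / real (Suc n) < d" using small[OF d] by blast
    define n where "n = max n1 n2"
    have A: "\<bar>\<zeta> (a n) - v\<bar> < e / 2" using n1 unfolding n_def by simp
    have B: "1 / real (Suc n) < d" using n2 unfolding n_def by simp
    have "\<bar>\<zeta> g - v\<bar> < e" if g: "g \<in> CcO W" and hg: "hat_norm W (\<lambda>p. lift g p - F p) < d" for g
    proof -
      have "\<bar>\<zeta> g - \<zeta> (a n)\<bar> \<le> Nq * (hat_norm W (\<lambda>p. lift g p - F p) + hat_norm W (\<lambda>p. lift (a n) p - F p))"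
        by (rule hl[OF F(1) g aC])
      also have "\<dots> \<le> Nq * (2 * d)" using hg ah[of n] B Nq_ge by (intro mult_left_mono) auto
      finally show ?thesis using Nd A by linarith
    qed
    then show "\<exists>d>0. \<forall>g\<in>CcO W. hat_norm W (\<lambda>p. lift g p - F p) < d \<longrightarrow> \<bar>\<zeta> g - v\<bar> < e"
      using d by blast
  qed
  then show ?thesis by blast
qed

lemma zhat0_Pz':
  assumes F: "continuous_map (ocomp W) euclideanreal F" "F None = 0"
  shows "Pz F (zhat0 \<zeta> W F)"
proof -
  obtain v where v: "Pz F v" using Pz_exists[OF F] by blast
  have "(THE v. Pz F v) = v" by (rule the_equality[where P="Pz F", OF v]) (use Pz_unique[OF F _ v] in blast)
  then show ?thesis using v zhat0_Pz by simp
qed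

lemma zchar:
  assumes F: "continuous_map (ocomp W) euclideanreal F" "F None = 0" and g: "g \<in> CcO W"
  shows "\<bar>\<zeta> g - zhat0 \<zeta> W F\<bar> \<le> Nq * hat_norm W (\<lambda>p. lift g p - F p)"
proof -
  define z where "z = zhat0 \<zeta> W F"
  have Pzz: "Pz F z" using zhat0_Pz'[OF F] unfolding z_def .
  have "\<bar>\<zeta> g - z\<bar> \<le> Nq * hat_norm W (\<lambda>p. lift g p - F p) + e" if e: "e > 0" for e
  proof -
    define e' where "e' = e / (Nq + 1)"
    have n1: "Nq + 1 > 0" using Nq_ge by simp
    have e': "e' > 0" "e' + Nq * e' = e"
    proof -
      show "e' > 0" unfolding e'_def using e n1 by simp
      have "(Nq + 1) * e' = e" unfolding e'_def using n1 by simp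
      then show "e' + Nq * e' = e" by (simp add: algebra_simps)
    qed
    obtain d where d: "d > 0" "\<forall>g\<in>CcO W. hat_norm W (\<lambda>p. lift g p - F p) < d \<longrightarrow> \<bar>\<zeta> g - z\<bar> < e'"
      using Pzz e'(1) unfolding Pz_def by blast
    define h where "h = min (d / 2) e'"
    have h: "h > 0" "h < d" "h \<le> e'" using d e' unfolding h_def by auto
    have a: "appr F h \<in> CcO W" using appr_CcO[OF F h(1)] .
    have ha: "hat_norm W (\<lambda>p. lift (appr F h) p - F p) \<le> h" using appr_hn[where F=F, OF _ F(2)] h by simp
    then have A: "\<bar>\<zeta> (appr F h) - z\<bar> < e'" using d(2) a h by force
    have "\<bar>\<zeta> g - \<zeta> (appr F h)\<bar> \<le> Nq * (hat_norm W (\<lambda>p. lift g p - F p) + hat_norm W (\<lambda>p. lift (appr F h) p - F p))"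
      by (rule hl[OF F(1) g a])
    also have "\<dots> \<le> Nq * (hat_norm W (\<lambda>p. lift g p - F p) + e')"
      using ha h Nq_ge by (intro mult_left_mono) auto
    finally show ?thesis using A e'(2) by (simp add: algebra_simps)
  qed
  then show ?thesis unfolding z_def[symmetric] by (rule field_le_epsilon)
qed

end

lemma uc_real:
  fixes kk :: "real \<Rightarrow> real" and R :: real
  assumes c: "continuous_on UNIV kk" and e: "(e::real) > 0"
  shows "\<exists>h>0. \<forall>s t. \<bar>s\<bar> \<le> R \<longrightarrow> \<bar>t\<bar> \<le> R \<longrightarrow> \<bar>s - t\<bar> < h \<longrightarrow> \<bar>kk s - kk t\<bar> < e"
proof -
  have "uniformly_continuous_on {-R..R} kk"
    using compact_uniformly_continuous[of "{-R..R}" kk] c continuous_on_subset by blast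
  then obtain h where h: "h > 0" "\<forall>x\<in>{-R..R}. \<forall>x'\<in>{-R..R}. dist x' x < h \<longrightarrow> dist (kk x') (kk x) < e"
    using e unfolding uniformly_continuous_on_def by blast
  show ?thesis
  proof (intro exI[of _ h] conjI allI impI)
    fix s t :: real assume "\<bar>s\<bar> \<le> R" "\<bar>t\<bar> \<le> R" "\<bar>s - t\<bar> < h"
    then show "\<bar>kk s - kk t\<bar> < e" using h(2)[rule_format, of t s] by (simp add: dist_real_def abs_le_iff)
  qed (use h in auto)
qed

lemma zero_by_eps:
  assumes c: "(c::real) \<ge> 0" and h: "\<And>e. e > 0 \<Longrightarrow> \<bar>X\<bar> \<le> c * e"
  shows "X = 0"
proof -
  have "\<bar>X\<bar> \<le> 0 + e" if e: "e > 0" for e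
  proof -
    have "\<bar>X\<bar> \<le> c * (e / (c + 1))" using h[of "e / (c + 1)"] e c by simp
    also have "\<dots> \<le> e" using c e by (simp add: field_simps)
    finally show ?thesis by simp
  qed
  then have "\<bar>X\<bar> \<le> 0" by (rule field_le_epsilon)
  then show ?thesis by simp
qed

context qsetup
begin

lemma mono0:
  assumes F: "continuous_map (ocomp W) euclideanreal F" "F None = 0"
    and H: "continuous_map (ocomp W) euclideanreal H" "H None = 0"
    and d: "d \<ge> 0" and le: "\<And>p. p \<in> Ts \<Longrightarrow> F p \<le> H p + d"
  shows "zhat0 \<zeta> W F \<le> zhat0 \<zeta> W H + d * lam"
proof (rule field_le_epsilon)
  fix e :: real assume e: "e > 0"
  define h where "h = e / (2 * (Nq + 1))"
  have n1: "Nq + 1 > 0" using Nq_ge by simp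
  have hp: "h > 0" unfolding h_def using e n1 by simp
  have "h = (e / 2) / (Nq + 1)" unfolding h_def by simp
  moreover have "\<And>M x. (M::real) > 0 \<Longrightarrow> M * (x / M) = x" by simp
  ultimately have "(Nq + 1) * h = e / 2" using n1 by metis
  then have "Nq * h + Nq * h \<le> e" using hp by (simp add: algebra_simps)
  note h = hp this
  define a where "a = appr F h"
  define b where "b = appr H h"
  have aC: "a \<in> CcO W" unfolding a_def by (rule appr_CcO[OF F h(1)])
  have bC: "b \<in> CcO W" unfolding b_def by (rule appr_CcO[OF H h(1)])
  define \<phi> where "\<phi> t = max 0 (2 * \<bar>t\<bar> / h - 1)" for t
  have \<phi>c: "continuous_on UNIV \<phi>" unfolding \<phi>_def using h(1) by (auto intro!: continuous_intros)
  have \<phi>0: "\<phi> t = 0" if "\<bar>t\<bar> \<le> h / 2" for t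
  proof -
    have "2 * \<bar>t\<bar> / h \<le> 1" using that h by (simp add: field_simps)
    then show ?thesis unfolding \<phi>_def by simp
  qed
  have \<phi>1: "\<phi> t \<ge> 1" if "\<bar>t\<bar> > h" for t
  proof -
    have "2 * \<bar>t\<bar> / h \<ge> 2" using that h by (simp add: field_simps)
    then show ?thesis unfolding \<phi>_def by simp
  qed
  have \<phi>g: "\<phi> t \<ge> 0" for t unfolding \<phi>_def by simp
  have h2: "h / 2 > 0" using h by simp
  have e1C: "(\<lambda>x. \<phi> (down W F x)) \<in> CcO W" by (rule down_CcO[OF oW F h2 \<phi>c \<phi>0])
  have e2C: "(\<lambda>x. \<phi> (down W H x)) \<in> CcO W" by (rule down_CcO[OF oW H h2 \<phi>c \<phi>0])
  have sC: "(\<lambda>x. 1 * \<phi> (down W F x) + 1 * \<phi> (down W H x)) \<in> CcO W" by (rule CcO_lin[OF oW e1C e2C])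
  define ee where "ee x = min 1 (1 * \<phi> (down W F x) + 1 * \<phi> (down W H x))" for x
  have eC: "ee \<in> CcO W" unfolding ee_def
    by (rule CcO_comp[OF oW sC, of "\<lambda>t. min 1 t"]) (auto intro!: continuous_intros)
  have e01: "\<And>x. 0 \<le> ee x" "\<And>x. ee x \<le> 1" unfolding ee_def using \<phi>g by auto
  have e1: "ee x = 1" if "a x \<noteq> 0 \<or> b x \<noteq> 0" for x
  proof -
    have "\<bar>down W F x\<bar> > h \<or> \<bar>down W H x\<bar> > h"
      using that trunc_nz unfolding a_def b_def appr_def by blast
    then have "\<phi> (down W F x) + \<phi> (down W H x) \<ge> 1" using \<phi>1 \<phi>g by (meson add_increasing add_increasing2)
    then show ?thesis unfolding ee_def by simp
  qed
  have ab: "a x \<le> b x + d" for x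
  proof (cases "x \<in> W")
    case True
    then have "F (Some x) \<le> H (Some x) + d" using le by simp
    then show ?thesis unfolding a_def b_def appr_def down_def using True trunc_mono h(1) d by simp
  next
    case False
    then show ?thesis unfolding a_def b_def appr_def down_def using d trunc_zero[of 0 h] h by simp
  qed
  have K: "\<zeta> a \<le> \<zeta> b + d * lam" by (rule key[OF aC bC eC e01 e1 d ab])
  have A: "\<bar>\<zeta> a - zhat0 \<zeta> W F\<bar> \<le> Nq * h"
  proof -
    have "\<bar>\<zeta> a - zhat0 \<zeta> W F\<bar> \<le> Nq * hat_norm W (\<lambda>p. lift a p - F p)" by (rule zchar[OF F aC])
    also have "\<dots> \<le> Nq * h" unfolding a_def using appr_hn[where F=F, OF _ F(2)] h Nq_ge
      by (intro mult_left_mono) auto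
    finally show ?thesis .
  qed
  have B: "\<bar>\<zeta> b - zhat0 \<zeta> W H\<bar> \<le> Nq * h"
  proof -
    have "\<bar>\<zeta> b - zhat0 \<zeta> W H\<bar> \<le> Nq * hat_norm W (\<lambda>p. lift b p - H p)" by (rule zchar[OF H bC])
    also have "\<dots> \<le> Nq * h" unfolding b_def using appr_hn[where F=H, OF _ H(2)] h Nq_ge
      by (intro mult_left_mono) auto
    finally show ?thesis .
  qed
  show "zhat0 \<zeta> W F \<le> zhat0 \<zeta> W H + d * lam + e" using K A B h(2) by linarith
qed

lemma lin0:
  assumes G: "continuous_map (ocomp W) euclideanreal G" "G None = 0"
    and c1: "continuous_on UNIV k1" "k1 0 = 0" and c2: "continuous_on UNIV k2" "k2 0 = 0"
  shows "zhat0 \<zeta> W (\<lambda>p. a * k1 (G p) + b * k2 (G p)) =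
         a * zhat0 \<zeta> W (\<lambda>p. k1 (G p)) + b * zhat0 \<zeta> W (\<lambda>p. k2 (G p))"
proof -
  have cm1: "continuous_map euclidean euclideanreal k1" "continuous_map euclidean euclideanreal k2"
    using c1 c2 by auto
  have G1: "continuous_map (ocomp W) euclideanreal (\<lambda>p. k1 (G p))" "(\<lambda>p. k1 (G p)) None = 0"
    using continuous_map_compose[OF G(1) cm1(1)] G(2) c1 by (auto simp: o_def)
  have G2: "continuous_map (ocomp W) euclideanreal (\<lambda>p. k2 (G p))" "(\<lambda>p. k2 (G p)) None = 0"
    using continuous_map_compose[OF G(1) cm1(2)] G(2) c2 by (auto simp: o_def)
  have G3: "continuous_map (ocomp W) euclideanreal (\<lambda>p. a * k1 (G p) + b * k2 (G p))"
    "(\<lambda>p. a * k1 (G p) + b * k2 (G p)) None = 0"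
    using G1 G2 by (auto intro!: continuous_intros)
  obtain B0 where B0: "\<forall>p\<in>Ts. \<bar>G p\<bar> \<le> B0" using bdd_F[OF G(1)] by blast
  define R where "R = \<bar>B0\<bar> + 1"
  define c where "c = Nq * (2 * (\<bar>a\<bar> + \<bar>b\<bar>))"
  have cge: "c \<ge> 0" unfolding c_def using Nq_ge by simp
  show ?thesis
  proof (rule zero_by_eps[OF cge, of _, THEN eq_iff_diff_eq_0[THEN iffD2]])
    fix e :: real assume e: "e > 0"
    obtain h1 where h1: "h1 > 0" "\<forall>s t. \<bar>s\<bar> \<le> R \<longrightarrow> \<bar>t\<bar> \<le> R \<longrightarrow> \<bar>s - t\<bar> < h1 \<longrightarrow> \<bar>k1 s - k1 t\<bar> < e"
      using uc_real[OF c1(1) e] by blast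
    obtain h2 where h2: "h2 > 0" "\<forall>s t. \<bar>s\<bar> \<le> R \<longrightarrow> \<bar>t\<bar> \<le> R \<longrightarrow> \<bar>s - t\<bar> < h2 \<longrightarrow> \<bar>k2 s - k2 t\<bar> < e"
      using uc_real[OF c2(1) e] by blast
    define h where "h = min 1 (min h1 h2) / 2"
    have h: "h > 0" "h < h1" "h < h2" "h \<le> 1" using h1 h2 unfolding h_def by auto
    define g where "g = appr G h"
    have gC: "g \<in> CcO W" unfolding g_def by (rule appr_CcO[OF G h(1)])
    have g1C: "(\<lambda>x. k1 (g x)) \<in> CcO W" by (rule CcO_comp[OF oW gC c1])
    have g2C: "(\<lambda>x. k2 (g x)) \<in> CcO W" by (rule CcO_comp[OF oW gC c2])
    have g3C: "(\<lambda>x. a * k1 (g x) + b * k2 (g x)) \<in> CcO W" by (rule CcO_lin[OF oW g1C g2C])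
    have close: "\<bar>k1 (lift g p) - k1 (G p)\<bar> \<le> e \<and> \<bar>k2 (lift g p) - k2 (G p)\<bar> \<le> e" if p: "p \<in> Ts" for p
    proof -
      have d: "\<bar>lift g p - G p\<bar> \<le> h" unfolding g_def by (rule appr_close[where F=G, OF _ G(2) p]) (use h in simp)
      have "\<bar>G p\<bar> \<le> \<bar>B0\<bar>" using B0 p by force
      then have r: "\<bar>G p\<bar> \<le> R" "\<bar>lift g p\<bar> \<le> R" using d h unfolding R_def by auto
      show ?thesis using h1(2)[rule_format, OF r(2,1)] h2(2)[rule_format, OF r(2,1)] d h by auto
    qed
    have lf: "lift (\<lambda>x. \<phi> (g x)) p = \<phi> (lift g p)" if "\<phi> 0 = 0" for \<phi> :: "real \<Rightarrow> real" and p
      using that by (cases p) (auto simp: lift_def)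
    have lf3: "lift (\<lambda>x. a * k1 (g x) + b * k2 (g x)) p = a * k1 (lift g p) + b * k2 (lift g p)" for p
      using c1(2) c2(2) by (cases p) (auto simp: lift_def)
    have E1: "\<bar>\<zeta> (\<lambda>x. k1 (g x)) - zhat0 \<zeta> W (\<lambda>p. k1 (G p))\<bar> \<le> Nq * e"
    proof -
      have "hat_norm W (\<lambda>p. lift (\<lambda>x. k1 (g x)) p - k1 (G p)) \<le> e"
        by (rule HN_le) (use close lf[where \<phi>=k1, OF c1(2)] in auto)
      then show ?thesis using zchar[OF G1 g1C] Nq_ge by (smt (verit) mult_left_mono)
    qed
    have E2: "\<bar>\<zeta> (\<lambda>x. k2 (g x)) - zhat0 \<zeta> W (\<lambda>p. k2 (G p))\<bar> \<le> Nq * e"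
    proof -
      have "hat_norm W (\<lambda>p. lift (\<lambda>x. k2 (g x)) p - k2 (G p)) \<le> e"
        by (rule HN_le) (use close lf[where \<phi>=k2, OF c2(2)] in auto)
      then show ?thesis using zchar[OF G2 g2C] Nq_ge by (smt (verit) mult_left_mono)
    qed
    have E3: "\<bar>\<zeta> (\<lambda>x. a * k1 (g x) + b * k2 (g x)) - zhat0 \<zeta> W (\<lambda>p. a * k1 (G p) + b * k2 (G p))\<bar>
        \<le> Nq * ((\<bar>a\<bar> + \<bar>b\<bar>) * e)"
    proof -
      have "hat_norm W (\<lambda>p. lift (\<lambda>x. a * k1 (g x) + b * k2 (g x)) p - (a * k1 (G p) + b * k2 (G p)))
          \<le> (\<bar>a\<bar> + \<bar>b\<bar>) * e"
      proof (rule HN_le)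
        fix p assume p: "p \<in> Ts"
        have "\<bar>a * k1 (lift g p) - a * k1 (G p)\<bar> \<le> \<bar>a\<bar> * e"
          using close[OF p] unfolding right_diff_distrib[symmetric] abs_mult by (auto intro: mult_left_mono)
        moreover have "\<bar>b * k2 (lift g p) - b * k2 (G p)\<bar> \<le> \<bar>b\<bar> * e"
          using close[OF p] unfolding right_diff_distrib[symmetric] abs_mult by (auto intro: mult_left_mono)
        ultimately show "\<bar>lift (\<lambda>x. a * k1 (g x) + b * k2 (g x)) p - (a * k1 (G p) + b * k2 (G p))\<bar>
          \<le> (\<bar>a\<bar> + \<bar>b\<bar>) * e" unfolding lf3 by (simp add: algebra_simps)
      qed
      then show ?thesis using zchar[OF G3 g3C] Nq_ge by (smt (verit) mult_left_mono)
    qed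
    have L: "\<zeta> (\<lambda>x. a * k1 (g x) + b * k2 (g x)) = a * \<zeta> (\<lambda>x. k1 (g x)) + b * \<zeta> (\<lambda>x. k2 (g x))"
      by (rule qlin[OF CcO_D(6)[OF oW gC] c1 c2])
    have "\<bar>a * (\<zeta> (\<lambda>x. k1 (g x)) - zhat0 \<zeta> W (\<lambda>p. k1 (G p)))\<bar> \<le> \<bar>a\<bar> * (Nq * e)"
      using E1 by (simp add: abs_mult mult_left_mono)
    moreover have "\<bar>b * (\<zeta> (\<lambda>x. k2 (g x)) - zhat0 \<zeta> W (\<lambda>p. k2 (G p)))\<bar> \<le> \<bar>b\<bar> * (Nq * e)"
      using E2 by (simp add: abs_mult mult_left_mono)
    ultimately show "\<bar>zhat0 \<zeta> W (\<lambda>p. a * k1 (G p) + b * k2 (G p)) -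
         (a * zhat0 \<zeta> W (\<lambda>p. k1 (G p)) + b * zhat0 \<zeta> W (\<lambda>p. k2 (G p)))\<bar> \<le> c * e"
      using E3 L unfolding c_def by (simp add: algebra_simps abs_le_iff)
  qed
qed

end

context qsetup
begin

lemma C0_of:
  assumes "continuous_map (ocomp W) euclideanreal f"
  shows "continuous_map (ocomp W) euclideanreal (\<lambda>p. f p - f None)" "(\<lambda>p. f p - f None) None = 0"
  using assms by (auto intro!: continuous_intros)

lemma mono_main:
  assumes f: "continuous_map (ocomp W) euclideanreal f" and h: "continuous_map (ocomp W) euclideanreal h"
    and le: "\<forall>p\<in>topspace (ocomp W). f p \<le> h p"
  shows "zhat \<zeta> W f \<le> zhat \<zeta> W h"
proof -
  have le': "\<And>p. p \<in> Ts \<Longrightarrow> f p \<le> h p" using le topspace_ocomp[OF oW] by auto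
  define d where "d = h None - f None"
  have d: "d \<ge> 0" using le'[of None] unfolding d_def by simp
  have "zhat0 \<zeta> W (\<lambda>p. f p - f None) \<le> zhat0 \<zeta> W (\<lambda>p. h p - h None) + d * lam"
    by (rule mono0[OF C0_of[OF f] C0_of[OF h] d]) (use le' in \<open>auto simp: d_def\<close>)
  moreover have "lam * h None = lam * f None + d * lam" unfolding d_def by (simp add: algebra_simps)
  ultimately show ?thesis unfolding zhat_def by linarith
qed

lemma shift: "zhat \<zeta> W (\<lambda>p. h p + t) = zhat \<zeta> W h + lam * t"
  unfolding zhat_def by (simp add: algebra_simps)

lemma lip_half:
  assumes f: "continuous_map (ocomp W) euclideanreal f" and h: "continuous_map (ocomp W) euclideanreal h"
  shows "zhat \<zeta> W f - zhat \<zeta> W h \<le> lam * hat_norm W (\<lambda>p. f p - h p)"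
proof -
  define t where "t = hat_norm W (\<lambda>p. f p - h p)"
  have fh: "continuous_map (ocomp W) euclideanreal (\<lambda>p. f p - h p)" using f h by (auto intro!: continuous_intros)
  obtain B where B: "\<forall>p\<in>Ts. \<bar>f p - h p\<bar> \<le> B" using bdd_F[OF fh] by blast
  have "\<forall>p\<in>topspace (ocomp W). f p \<le> h p + t"
  proof
    fix p assume "p \<in> topspace (ocomp W)"
    then have p: "p \<in> Ts" using topspace_ocomp[OF oW] by simp
    have "\<bar>f p - h p\<bar> \<le> t" unfolding t_def by (rule HN_up[OF B p])
    then show "f p \<le> h p + t" by simp
  qed
  then have "zhat \<zeta> W f \<le> zhat \<zeta> W (\<lambda>p. h p + t)"
    by (intro mono_main[OF f]) (use h in \<open>auto intro!: continuous_intros\<close>)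
  then show ?thesis unfolding shift t_def by simp
qed

lemma lin_main:
  assumes f: "continuous_map (ocomp W) euclideanreal f"
    and p: "continuous_on UNIV \<phi>" and q: "continuous_on UNIV \<psi>"
  shows "zhat \<zeta> W (\<lambda>p. a * \<phi> (f p) + b * \<psi> (f p)) = a * zhat \<zeta> W (\<phi> \<circ> f) + b * zhat \<zeta> W (\<psi> \<circ> f)"
proof -
  define c where "c = f None"
  define G where "G p = f p - c" for p
  define k1 where "k1 t = \<phi> (t + c) - \<phi> c" for t
  define k2 where "k2 t = \<psi> (t + c) - \<psi> c" for t
  have G: "continuous_map (ocomp W) euclideanreal G" "G None = 0"
    using C0_of[OF f] unfolding G_def c_def by auto
  have c1: "continuous_on UNIV k1" "k1 0 = 0" unfolding k1_def
    using p by (auto intro!: continuous_intros intro: continuous_on_compose2[OF p])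
  have c2: "continuous_on UNIV k2" "k2 0 = 0" unfolding k2_def
    using q by (auto intro!: continuous_intros intro: continuous_on_compose2[OF q])
  have fG: "f p = G p + c" for p unfolding G_def by simp
  have e1: "(\<lambda>p. (a * \<phi> (f p) + b * \<psi> (f p)) - (a * \<phi> (f None) + b * \<psi> (f None))) = (\<lambda>p. a * k1 (G p) + b * k2 (G p))"
    unfolding k1_def k2_def G_def c_def by (simp add: algebra_simps)
  have e2: "(\<lambda>p. (\<phi> \<circ> f) p - (\<phi> \<circ> f) None) = (\<lambda>p. k1 (G p))"
    unfolding k1_def G_def c_def by (simp add: o_def)
  have e3: "(\<lambda>p. (\<psi> \<circ> f) p - (\<psi> \<circ> f) None) = (\<lambda>p. k2 (G p))"
    unfolding k2_def G_def c_def by (simp add: o_def)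
  have L: "zhat0 \<zeta> W (\<lambda>p. a * k1 (G p) + b * k2 (G p)) =
         a * zhat0 \<zeta> W (\<lambda>p. k1 (G p)) + b * zhat0 \<zeta> W (\<lambda>p. k2 (G p))"
    by (rule lin0[OF G c1 c2])
  show ?thesis unfolding zhat_def e1 e2 e3 L by (simp add: algebra_simps c_def)
qed

end

theorem lemma2p3:
  fixes \<zeta> :: "('a::t2_space \<Rightarrow> real) \<Rightarrow> real" and W :: "'a set"
  assumes "locally_compact_space (euclidean :: 'a topology)"
    and "quasi_integral \<zeta>"
    and "open W" and "compact (closure W)"
  shows "(\<forall>f h. continuous_map (ocomp W) euclideanreal f \<and> continuous_map (ocomp W) euclideanreal h
            \<and> (\<forall>p\<in>topspace (ocomp W). f p \<le> h p) \<longrightarrow> zhat \<zeta> W f \<le> zhat \<zeta> W h)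
      \<and> (\<exists>N\<ge>0. \<forall>f h. continuous_map (ocomp W) euclideanreal f \<and> continuous_map (ocomp W) euclideanreal h
            \<longrightarrow> \<bar>zhat \<zeta> W f - zhat \<zeta> W h\<bar> \<le> N * hat_norm W (\<lambda>p. f p - h p))
      \<and> (\<forall>f. continuous_map (ocomp W) euclideanreal f \<longrightarrow>
           (\<forall>\<phi> \<psi> :: real \<Rightarrow> real. \<forall>a b :: real. continuous_on UNIV \<phi> \<and> continuous_on UNIV \<psi> \<longrightarrow>
              zhat \<zeta> W (\<lambda>p. a * \<phi> (f p) + b * \<psi> (f p)) = a * zhat \<zeta> W (\<phi> \<circ> f) + b * zhat \<zeta> W (\<psi> \<circ> f)))"
proof -
  interpret qsetup \<zeta> W using assms by unfold_locales auto
  have hn: "hat_norm W (\<lambda>p. h p - f p) = hat_norm W (\<lambda>p. f p - h p)" for f h :: "'a option \<Rightarrow> real"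
    unfolding hat_norm_def by (simp add: abs_minus_commute)
  have L: "\<bar>zhat \<zeta> W f - zhat \<zeta> W h\<bar> \<le> lam * hat_norm W (\<lambda>p. f p - h p)"
    if "continuous_map (ocomp W) euclideanreal f" "continuous_map (ocomp W) euclideanreal h" for f h
    using lip_half[OF that] lip_half[OF that(2,1)] hn[of h f] by (simp add: abs_le_iff)
  show ?thesis
    using mono_main L lin_main lam_ge0 by blast
qed

end
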